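(* Let $R$ be an associative ring with unity, $\sigma$ an endomorphism of $R$ and $\delta$ a $\sigma$-derivation of $R$. Assume that $Re$ is $(\sigma,\delta)$-stable for all $e\in\mathcal{S}_\ell(R)$ and that $R$ satisfies the condition $(\mathcal{C}_\sigma)$. If $R$ is right p.q.-Baer, then the Ore extension $R[x;\sigma,\delta]$ is right p.q.-Baer.
   Context: A $\sigma$-derivation is an additive map $\delta$ with $\delta(ab)=\sigma(a)\delta(b)+\delta(a)b$. $R[x;\sigma,\delta]$ is the ring of polynomials $\sum a_ix^i$ ($a_i\in R$, coefficients on the left) with multiplication determined by that of $R$ and $xa=\sigma(a)x+\delta(a)$. $\mathcal{S}_\ell(R)$ is the set of idempotents $e$ with $ere=re$ for all $r\in R$. A subset $X$ is $(\sigma,\delta)$-stable if $\sigma(X)\subseteq X$ and $\delta(X)\subseteq X$. $R$ satisfies $(\mathcal{C}_\sigma)$ if $a\sigma(b)=0$ implies $ab=0$ for all $a,b\in R$. A ring $T$ is right p.q.-Baer if the right annihilator $r_T(aT)=\{t\in T\mid aTt=0\}$ of every principal right ideal $aT$ is generated (as a right ideal) by an idempotent. *)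

theory Defs
  imports "HOL-Computational_Algebra.Polynomial"
begin

definition ring_endo :: "('a::ring_1 \<Rightarrow> 'a) \<Rightarrow> bool" where
  "ring_endo \<sigma> \<longleftrightarrow> (\<forall>a b. \<sigma> (a + b) = \<sigma> a + \<sigma> b) \<and>
                   (\<forall>a b. \<sigma> (a * b) = \<sigma> a * \<sigma> b) \<and> \<sigma> 1 = 1"

definition sigma_derivation :: "('a::ring_1 \<Rightarrow> 'a) \<Rightarrow> ('a \<Rightarrow> 'a) \<Rightarrow> bool" where
  "sigma_derivation \<sigma> \<delta> \<longleftrightarrow> (\<forall>a b. \<delta> (a + b) = \<delta> a + \<delta> b) \<and>
                   (\<forall>a b. \<delta> (a * b) = \<sigma> a * \<delta> b + \<delta> a * b)"

text \<open>Coefficients of x^n a = sum_k (xcoef n a k) x^k in R[x;sigma,delta],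
  computed from x c = sigma(c) x + delta(c).\<close>
fun xcoef :: "('a::ring_1 \<Rightarrow> 'a) \<Rightarrow> ('a \<Rightarrow> 'a) \<Rightarrow> nat \<Rightarrow> 'a \<Rightarrow> nat \<Rightarrow> 'a" where
  "xcoef \<sigma> \<delta> 0 a k = (if k = 0 then a else 0)"
| "xcoef \<sigma> \<delta> (Suc n) a k =
     (if k = 0 then 0 else \<sigma> (xcoef \<sigma> \<delta> n a (k - 1))) + \<delta> (xcoef \<sigma> \<delta> n a k)"

text \<open>Multiplication of the Ore extension R[x;sigma,delta] on polynomials
  with left coefficients (sum p_i x^i)(sum q_j x^j) = sum p_i (x^i q_j) x^j.\<close>
definition ore_mult :: "('a::ring_1 \<Rightarrow> 'a) \<Rightarrow> ('a \<Rightarrow> 'a) \<Rightarrow> 'a poly \<Rightarrow> 'a poly \<Rightarrow> 'a poly" where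
  "ore_mult \<sigma> \<delta> p q =
     (\<Sum>i\<le>degree p. \<Sum>j\<le>degree q. \<Sum>k\<le>i.
        monom (coeff p i * xcoef \<sigma> \<delta> i (coeff q j) k) (k + j))"

definition S_l :: "'a::ring_1 set" where
  "S_l = {e. e * e = e \<and> (\<forall>r. e * r * e = r * e)}"

definition sd_stable :: "('a \<Rightarrow> 'a) \<Rightarrow> ('a \<Rightarrow> 'a) \<Rightarrow> 'a set \<Rightarrow> bool" where
  "sd_stable \<sigma> \<delta> X \<longleftrightarrow> \<sigma> ` X \<subseteq> X \<and> \<delta> ` X \<subseteq> X"

definition cond_C_sigma :: "('a::ring_1 \<Rightarrow> 'a) \<Rightarrow> bool" where
  "cond_C_sigma \<sigma> \<longleftrightarrow> (\<forall>a b. a * \<sigma> b = 0 \<longrightarrow> a * b = 0)"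

text \<open>Right p.q.-Baer for a ring given by its multiplication and zero (carrier = whole type):
  for every a, r(aT) = {t. a T t = 0} equals eT for some idempotent e.\<close>
definition right_pq_Baer :: "('b \<Rightarrow> 'b \<Rightarrow> 'b) \<Rightarrow> 'b \<Rightarrow> bool" where
  "right_pq_Baer mul z \<longleftrightarrow>
     (\<forall>a. \<exists>e. mul e e = e \<and> {t. \<forall>s. mul (mul a s) t = z} = range (mul e))"

end

theory Submission imports Defs begin

definition lsm :: "'a::ring_1 \<Rightarrow> 'a poly \<Rightarrow> 'a poly" where
  "lsm c p = map_poly (\<lambda>x. c * x) p"

lemma coeff_lsm[simp]: "coeff (lsm c p) n = c * coeff p n"
  by (simp add: lsm_def coeff_map_poly)

lemma lsm_zero_left[simp]: "lsm 0 p = 0" by (simp add: poly_eq_iff)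
lemma lsm_zero_right[simp]: "lsm c 0 = 0" by (simp add: poly_eq_iff)
lemma lsm_add_left: "lsm (a + b) p = lsm a p + lsm b p" by (simp add: poly_eq_iff distrib_right)
lemma lsm_add_right: "lsm c (p + q) = lsm c p + lsm c q" by (simp add: poly_eq_iff distrib_left)
lemma lsm_diff_right: "lsm c (p - q) = lsm c p - lsm c q" by (simp add: poly_eq_iff algebra_simps)
lemma lsm_lsm: "lsm a (lsm b p) = lsm (a * b) p" by (simp add: poly_eq_iff mult.assoc)
lemma lsm_sum_right: "lsm c (\<Sum>i\<in>A. f i) = (\<Sum>i\<in>A. lsm c (f i))"
  by (induct A rule: infinite_finite_induct) (simp_all add: lsm_add_right)
lemma lsm_sum_left: "lsm (\<Sum>i\<in>A. f i) p = (\<Sum>i\<in>A. lsm (f i) p)"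
  by (induct A rule: infinite_finite_induct) (simp_all add: lsm_add_left)

locale ore =
  fixes \<sigma> \<delta> :: "'a::ring_1 \<Rightarrow> 'a"
  assumes endo: "ring_endo \<sigma>" and der: "sigma_derivation \<sigma> \<delta>"
begin

lemma s_add: "\<sigma> (a + b) = \<sigma> a + \<sigma> b" using endo by (simp add: ring_endo_def)
lemma s_mult: "\<sigma> (a * b) = \<sigma> a * \<sigma> b" using endo by (simp add: ring_endo_def)
lemma s_one[simp]: "\<sigma> 1 = 1" using endo by (simp add: ring_endo_def)
lemma s_zero[simp]: "\<sigma> 0 = 0" using s_add[of 0 0] by simp
lemma d_add: "\<delta> (a + b) = \<delta> a + \<delta> b" using der by (simp add: sigma_derivation_def)
lemma d_mult: "\<delta> (a * b) = \<sigma> a * \<delta> b + \<delta> a * b" using der by (simp add: sigma_derivation_def)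
lemma d_zero[simp]: "\<delta> 0 = 0" using d_add[of 0 0] by simp
lemma s_sum: "\<sigma> (\<Sum>i\<in>A. f i) = (\<Sum>i\<in>A. \<sigma> (f i))"
  using sum_comp_morphism[of \<sigma> f A] s_add by (simp add: o_def)
lemma d_sum: "\<delta> (\<Sum>i\<in>A. f i) = (\<Sum>i\<in>A. \<delta> (f i))"
  using sum_comp_morphism[of \<delta> f A] d_add by (simp add: o_def)

definition X :: "'a poly \<Rightarrow> 'a poly" where
  "X q = pCons 0 (map_poly \<sigma> q) + map_poly \<delta> q"

lemma coeff_X: "coeff (X q) n = (if n = 0 then 0 else \<sigma> (coeff q (n - 1))) + \<delta> (coeff q n)"
  by (simp add: X_def coeff_map_poly coeff_pCons')

lemma X_add: "X (p + q) = X p + X q"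
  by (simp add: poly_eq_iff coeff_X s_add d_add algebra_simps)
lemma X_zero[simp]: "X 0 = 0"
  by (simp add: poly_eq_iff coeff_X)
lemma X_sum: "X (\<Sum>i\<in>A. f i) = (\<Sum>i\<in>A. X (f i))"
  using sum_comp_morphism[of X f A] X_add by (simp add: o_def)
lemma Xp_add: "(X^^i) (p + q) = (X^^i) p + (X^^i) q"
  by (induct i) (simp_all add: X_add)
lemma Xp_zero[simp]: "(X^^i) 0 = 0"
  by (induct i) simp_all
lemma Xp_diff: "(X^^i) (p - q) = (X^^i) p - (X^^i) q"
  using Xp_add[of i "p - q" q] by (simp add: algebra_simps)

lemma X_lsm: "X (lsm b h) = lsm (\<sigma> b) (X h) + lsm (\<delta> b) h"
  by (simp add: poly_eq_iff coeff_X s_mult d_mult algebra_simps)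

lemma xcoef_beyond: "i < k \<Longrightarrow> xcoef \<sigma> \<delta> i c k = 0"
  by (induct i arbitrary: k) auto

lemma coeff_Xp: "coeff ((X^^i) q) n =
   (\<Sum>j\<le>degree q. if j \<le> n then xcoef \<sigma> \<delta> i (coeff q j) (n - j) else 0)"
proof (induct i arbitrary: n)
  case 0
  have "(\<Sum>j\<le>degree q. if j \<le> n then xcoef \<sigma> \<delta> 0 (coeff q j) (n - j) else 0)
      = (\<Sum>j\<le>degree q. if j = n then coeff q j else 0)"
    by (rule sum.cong) auto
  also have "\<dots> = coeff q n" by (auto simp: coeff_eq_0)
  finally show ?case by simp
next
  case (Suc i)
  have "coeff ((X^^Suc i) q) n = (if n = 0 then 0 else \<sigma> (coeff ((X^^i) q) (n - 1))) + \<delta> (coeff ((X^^i) q) n)"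
    by (simp add: coeff_X)
  also have "\<dots> = (\<Sum>j\<le>degree q. (if n = 0 then 0 else \<sigma> (if j \<le> n - Suc 0 then xcoef \<sigma> \<delta> i (coeff q j) (n - Suc 0 - j) else 0))
        + \<delta> (if j \<le> n then xcoef \<sigma> \<delta> i (coeff q j) (n - j) else 0))"
    by (simp add: Suc s_sum d_sum sum.distrib)
  also have "\<dots> = (\<Sum>j\<le>degree q. if j \<le> n then xcoef \<sigma> \<delta> (Suc i) (coeff q j) (n - j) else 0)"
  proof (rule sum.cong)
    fix j assume "j \<in> {..degree q}"
    show "(if n = 0 then 0 else \<sigma> (if j \<le> n - Suc 0 then xcoef \<sigma> \<delta> i (coeff q j) (n - Suc 0 - j) else 0))
        + \<delta> (if j \<le> n then xcoef \<sigma> \<delta> i (coeff q j) (n - j) else 0) =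
        (if j \<le> n then xcoef \<sigma> \<delta> (Suc i) (coeff q j) (n - j) else 0)"
      by (cases "j < n"; cases "j = n") (auto simp: diff_diff_add)
  qed simp
  finally show ?case .
qed

abbreviation om where "om \<equiv> ore_mult \<sigma> \<delta>"

lemma sum_delta_help: "(\<Sum>k\<le>(i::nat). if k + j = (n::nat) then F k else 0) = (if j \<le> n \<and> n - j \<le> i then F (n - j) else (0::'a))"
proof -
  have e: "\<And>k. (k + j = n) = (k = n - j \<and> j \<le> n)" by auto
  have "(\<Sum>k\<le>i. if k + j = n then F k else 0) = (\<Sum>k\<le>i. if k = n - j \<and> j \<le> n then F k else 0)"
    by (simp only: e)
  also have "\<dots> = (if j \<le> n \<and> n - j \<le> i then F (n - j) else 0)"
    by (cases "j \<le> n") (auto simp: sum.delta)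
  finally show ?thesis .
qed

lemma om_X: "om p q = (\<Sum>i\<le>degree p. lsm (coeff p i) ((X^^i) q))"
proof (rule poly_eqI)
  fix n
  have "coeff (om p q) n = (\<Sum>i\<le>degree p. \<Sum>j\<le>degree q. \<Sum>k\<le>i.
        if k + j = n then coeff p i * xcoef \<sigma> \<delta> i (coeff q j) k else 0)"
    by (simp add: ore_mult_def coeff_sum)
  also have "\<dots> = (\<Sum>i\<le>degree p. \<Sum>j\<le>degree q.
        coeff p i * (if j \<le> n then xcoef \<sigma> \<delta> i (coeff q j) (n - j) else 0))"
    by (intro sum.cong refl) (auto simp: sum_delta_help xcoef_beyond)
  also have "\<dots> = coeff (\<Sum>i\<le>degree p. lsm (coeff p i) ((X^^i) q)) n"
    by (simp add: coeff_sum coeff_Xp sum_distrib_left)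
  finally show "coeff (om p q) n = coeff (\<Sum>i\<le>degree p. lsm (coeff p i) ((X^^i) q)) n" .
qed

lemma om_bound: "degree p \<le> N \<Longrightarrow> om p q = (\<Sum>i\<le>N. lsm (coeff p i) ((X^^i) q))"
  unfolding om_X
  by (rule sum.mono_neutral_right[symmetric]) (auto simp: coeff_eq_0)

lemma om_add_left: "om (p + r) q = om p q + om r q"
proof -
  let ?N = "max (degree p) (degree r)"
  have "degree (p + r) \<le> ?N" by (rule degree_add_le) auto
  then show ?thesis
    by (simp add: om_bound[of _ ?N] lsm_add_left sum.distrib)
qed

lemma om_zero_left[simp]: "om 0 q = 0" by (simp add: om_X)

lemma om_uminus_left: "om (- p) q = - om p q"
  using om_add_left[of p "-p" q] by (metis add.commute eq_neg_iff_add_eq_0 add.right_inverse om_zero_left)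

lemma om_diff_left: "om (p - r) q = om p q - om r q"
  using om_add_left[of p "-r" q] om_uminus_left[of r q] by simp

lemma om_lsm_left: "om (lsm c p) q = lsm c (om p q)"
proof -
  have "degree (lsm c p) \<le> degree p" by (rule degree_le) (simp add: coeff_eq_0)
  then show ?thesis
    by (simp add: om_bound[of _ "degree p"] lsm_sum_right lsm_lsm mult.assoc)
qed

lemma om_sum_left: "om (\<Sum>i\<in>A. f i) q = (\<Sum>i\<in>A. om (f i) q)"
  by (induct A rule: infinite_finite_induct) (simp_all add: om_add_left)

lemma om_monom_left: "om (monom c m) q = lsm c ((X^^m) q)"
proof -
  have "degree (monom c m) \<le> m" by (simp add: degree_monom_le)
  then have "om (monom c m) q = (\<Sum>i\<le>m. lsm (coeff (monom c m) i) ((X^^i) q))" by (rule om_bound)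
  also have "\<dots> = (\<Sum>i\<le>m. if i = m then lsm c ((X^^i) q) else 0)"
    by (rule sum.cong) auto
  finally show ?thesis by (simp add: sum.delta)
qed

lemma om_const_left: "om [:c:] q = lsm c q"
  using om_monom_left[of c 0 q] by (simp add: monom_0)

lemma om_add_right: "om p (q + r) = om p q + om p r"
  by (simp add: om_X Xp_add lsm_add_right sum.distrib)

lemma om_zero_right[simp]: "om p 0 = 0" by (simp add: om_X)

lemma om_diff_right: "om p (q - r) = om p q - om p r"
  by (simp add: om_X Xp_diff lsm_diff_right sum_subtractf)

lemma degree_X: "degree (X q) \<le> Suc (degree q)"
  by (rule degree_le) (auto simp: coeff_X coeff_eq_0)

lemma X_om: "X (om p r) = om (X p) r"
proof -
  let ?N = "degree p"
  have c: "coeff p (Suc ?N) = 0" by (simp add: coeff_eq_0)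
  have "X (om p r) = (\<Sum>i\<le>?N. lsm (\<sigma> (coeff p i)) ((X^^Suc i) r) + lsm (\<delta> (coeff p i)) ((X^^i) r))"
    by (simp add: om_X X_sum X_lsm)
  also have "\<dots> = (\<Sum>i\<le>?N. lsm (\<sigma> (coeff p i)) ((X^^Suc i) r)) + (\<Sum>i\<le>?N. lsm (\<delta> (coeff p i)) ((X^^i) r))"
    by (simp add: sum.distrib)
  also have "\<dots> = (\<Sum>i\<le>Suc ?N. lsm (if i = 0 then 0 else \<sigma> (coeff p (i - 1))) ((X^^i) r))
        + (\<Sum>i\<le>Suc ?N. lsm (\<delta> (coeff p i)) ((X^^i) r))"
  proof -
    let ?G = "\<lambda>i. lsm (if i = 0 then 0 else \<sigma> (coeff p (i - 1))) ((X^^i) r)"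
    have "(\<Sum>i\<le>Suc ?N. ?G i) = ?G 0 + (\<Sum>i\<le>?N. ?G (Suc i))" by (rule sum.atMost_Suc_shift)
    also have "\<dots> = (\<Sum>i\<le>?N. lsm (\<sigma> (coeff p i)) ((X^^Suc i) r))" by simp
    finally have 1: "(\<Sum>i\<le>Suc ?N. ?G i) = (\<Sum>i\<le>?N. lsm (\<sigma> (coeff p i)) ((X^^Suc i) r))" .
    have 2: "(\<Sum>i\<le>Suc ?N. lsm (\<delta> (coeff p i)) ((X^^i) r)) = (\<Sum>i\<le>?N. lsm (\<delta> (coeff p i)) ((X^^i) r))"
      by (simp only: sum.atMost_Suc c) simp
    show ?thesis by (simp only: 1 2)
  qed
  also have "\<dots> = (\<Sum>i\<le>Suc ?N. lsm (coeff (X p) i) ((X^^i) r))"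
    by (simp add: coeff_X lsm_add_left sum.distrib)
  also have "\<dots> = om (X p) r" by (rule om_bound[symmetric]) (rule degree_X)
  finally show ?thesis .
qed

lemma Xp_om: "(X^^i) (om p r) = om ((X^^i) p) r"
  by (induct i) (simp_all add: X_om)

lemma om_assoc: "om (om p q) r = om p (om q r)"
proof -
  have "om p (om q r) = (\<Sum>i\<le>degree p. lsm (coeff p i) (om ((X^^i) q) r))"
    by (simp add: om_X[of p] Xp_om)
  also have "\<dots> = (\<Sum>i\<le>degree p. om (lsm (coeff p i) ((X^^i) q)) r)"
    by (simp add: om_lsm_left)
  also have "\<dots> = om (om p q) r"
    by (simp add: om_sum_left om_X[of p q])
  finally show ?thesis by simp
qed

lemma degree_Xp: "degree ((X^^i) q) \<le> degree q + i"
  by (induct i) (auto intro: order.trans[OF degree_X])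

lemma coeff_X_top: "degree h \<le> M \<Longrightarrow> coeff (X h) (Suc M) = \<sigma> (coeff h M)"
  by (simp add: coeff_X coeff_eq_0)

lemma coeff_Xp_top: "degree q \<le> N \<Longrightarrow> coeff ((X^^i) q) (N + i) = (\<sigma>^^i) (coeff q N)"
proof (induct i)
  case 0 then show ?case by simp
next
  case (Suc i)
  have "degree ((X^^i) q) \<le> N + i" using degree_Xp[of i q] Suc.prems by simp
  then have "coeff (X ((X^^i) q)) (Suc (N + i)) = \<sigma> (coeff ((X^^i) q) (N + i))"
    by (rule coeff_X_top)
  then show ?case using Suc by simp
qed

lemma coeff_om: "coeff (om p q) n = (\<Sum>i\<le>degree p. coeff p i * coeff ((X^^i) q) n)"
  by (simp add: om_X coeff_sum)

lemma om_top:
  assumes "degree p \<le> M" "degree q \<le> N"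
  shows "degree (om p q) \<le> M + N \<and> coeff (om p q) (M + N) = coeff p M * (\<sigma>^^M) (coeff q N)"
proof -
  have c: "coeff (om p q) n = (\<Sum>i\<le>M. coeff p i * coeff ((X^^i) q) n)" for n
    by (simp add: om_bound[OF assms(1)] coeff_sum)
  have z: "coeff ((X^^i) q) n = 0" if "N + i < n" for i n
    using degree_Xp[of i q] assms(2) that by (intro coeff_eq_0) simp
  have "degree (om p q) \<le> M + N"
  proof (rule degree_le, intro allI impI)
    fix n assume "M + N < n"
    then show "coeff (om p q) n = 0" by (simp add: c z)
  qed
  moreover have "coeff (om p q) (M + N) = coeff p M * (\<sigma>^^M) (coeff q N)"
  proof -
    have "coeff (om p q) (M + N) = coeff p M * coeff ((X^^M) q) (M + N) +
        (\<Sum>i\<in>{..M} - {M}. coeff p i * coeff ((X^^i) q) (M + N))"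
      by (simp add: c sum.remove[of "{..M}" M])
    also have "(\<Sum>i\<in>{..M} - {M}. coeff p i * coeff ((X^^i) q) (M + N)) = 0"
      by (rule sum.neutral) (auto simp: z)
    finally show ?thesis using coeff_Xp_top[OF assms(2), of M] by (simp add: add.commute)
  qed
  ultimately show ?thesis by simp
qed

lemma sp_mult: "(\<sigma>^^m) (a * b) = (\<sigma>^^m) a * (\<sigma>^^m) b"
  by (induct m) (simp_all add: s_mult)

lemma Xp_in:
  assumes "\<forall>y\<in>U. \<sigma> y \<in> U" "\<forall>y\<in>U. \<delta> y \<in> U" "\<forall>y\<in>U. \<forall>z\<in>U. y + z \<in> U" "0 \<in> U"
    "\<forall>n. coeff q n \<in> U"
  shows "coeff ((X^^i) q) n \<in> U"
  using assms by (induct i arbitrary: n) (auto simp: coeff_X)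

lemma ann_om:
  assumes "\<forall>w. \<forall>y\<in>U. w * y \<in> U" "\<forall>i. \<forall>y\<in>U. coeff f i * y = 0" "y \<in> U"
  shows "coeff (om f s) n * y = 0"
  using assms by (simp add: coeff_om sum_distrib_right mult.assoc)

lemma kill:
  assumes "\<forall>y\<in>U. \<sigma> y \<in> U" "\<forall>y\<in>U. \<delta> y \<in> U" "\<forall>y\<in>U. \<forall>z\<in>U. y + z \<in> U" "0 \<in> U"
    "\<forall>w. \<forall>y\<in>U. w * y \<in> U" "\<forall>i. \<forall>y\<in>U. coeff f i * y = 0" "\<forall>n. coeff q n \<in> U"
  shows "om (om f s) q = 0"
proof -
  have "lsm (coeff (om f s) i) ((X^^i) q) = 0" for i
    using ann_om[OF assms(5,6)] Xp_in[OF assms(1-4,7)] by (simp add: poly_eq_iff)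
  then show ?thesis by (simp add: om_X)
qed

end

locale ore2 = ore +
  assumes stab: "\<forall>e\<in>S_l. sd_stable \<sigma> \<delta> (range (\<lambda>r. r * e))"
    and C: "cond_C_sigma \<sigma>"
    and pq: "right_pq_Baer ((*) :: 'a \<Rightarrow> 'a \<Rightarrow> 'a) 0"
begin

lemma Cpow: "a * (\<sigma>^^m) c = 0 \<Longrightarrow> a * c = 0"
proof (induct m arbitrary: c)
  case 0 then show ?case by simp
next
  case (Suc m)
  have "a * (\<sigma>^^m) (\<sigma> c) = 0" using Suc.prems by (simp add: funpow_Suc_right del: funpow.simps)
  then have "a * \<sigma> c = 0" by (rule Suc.hyps)
  then show ?case using C by (simp add: cond_C_sigma_def)
qed

lemma S_l_iff: "e \<in> S_l \<longleftrightarrow> e * e = e \<and> (\<forall>r. e * r * e = r * e)"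
  by (simp add: S_l_def)

lemma pq_e: "\<exists>e. e \<in> S_l \<and> (\<forall>y. (\<exists>z. y = e * z) \<longleftrightarrow> (\<forall>s. (a::'a) * s * y = 0))"
proof -
  obtain e where e: "e * e = e" "{t. \<forall>s. a * s * t = 0} = range ((*) e)"
    using pq unfolding right_pq_Baer_def by blast
  have ch: "(\<exists>z. y = e * z) \<longleftrightarrow> (\<forall>s. a * s * y = 0)" for y
    using e(2) by (auto simp: set_eq_iff image_iff)
  have "e * r * e = r * e" for r
  proof -
    have "\<forall>s. a * s * e = 0" using ch[of e] by (metis mult_1_right)
    then have "\<forall>s. a * s * (r * e) = 0" by (metis mult.assoc)
    then obtain z where "r * e = e * z" using ch by blast
    then show ?thesis using e(1) by (metis mult.assoc)
  qed
  then show ?thesis using ch e(1) by (auto simp: S_l_iff)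
qed

lemma U_closed:
  assumes u: "u \<in> S_l"
  shows "\<forall>y\<in>range ((*) u). \<sigma> y \<in> range ((*) u)"
    "\<forall>y\<in>range ((*) u). \<delta> y \<in> range ((*) u)"
    "\<forall>y\<in>range ((*) u). \<forall>z\<in>range ((*) u). y + z \<in> range ((*) u)"
    "0 \<in> range ((*) u)"
    "\<forall>w. \<forall>y\<in>range ((*) u). w * y \<in> range ((*) u)"
proof -
  have sc: "u * r * u = r * u" for r using u by (simp add: S_l_iff)
  have st: "sd_stable \<sigma> \<delta> (range (\<lambda>r. r * u))" using stab u by blast
  obtain r1 where r1: "\<sigma> u = r1 * u" using st unfolding sd_stable_def
    by (metis (no_types, lifting) image_subset_iff mult_1 rangeE rangeI)
  obtain r2 where r2: "\<delta> u = r2 * u" using st unfolding sd_stable_def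
    by (metis (no_types, lifting) image_subset_iff mult_1 rangeE rangeI)
  show "\<forall>y\<in>range ((*) u). \<sigma> y \<in> range ((*) u)"
  proof
    fix y assume "y \<in> range ((*) u)"
    then obtain z where "y = u * z" by auto
    then have "\<sigma> y = (u * r1 * u) * \<sigma> z" using r1 sc[of r1] by (simp add: s_mult)
    then have "\<sigma> y = u * (r1 * u * \<sigma> z)" by (simp add: mult.assoc)
    then show "\<sigma> y \<in> range ((*) u)" by auto
  qed
  show "\<forall>y\<in>range ((*) u). \<delta> y \<in> range ((*) u)"
  proof
    fix y assume "y \<in> range ((*) u)"
    then obtain z where "y = u * z" by auto
    then have "\<delta> y = (u * r1 * u) * \<delta> z + (u * r2 * u) * z"
      using r1 r2 sc[of r1] sc[of r2] by (simp add: d_mult)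
    then have "\<delta> y = u * (r1 * u * \<delta> z + r2 * u * z)"
      by (simp add: mult.assoc distrib_left)
    then show "\<delta> y \<in> range ((*) u)" by auto
  qed
  show "\<forall>y\<in>range ((*) u). \<forall>z\<in>range ((*) u). y + z \<in> range ((*) u)"
    by (auto simp: distrib_left[symmetric])
  show "0 \<in> range ((*) u)" by (metis mult_zero_right rangeI)
  show "\<forall>w. \<forall>y\<in>range ((*) u). w * y \<in> range ((*) u)"
  proof (intro allI ballI)
    fix w y assume "y \<in> range ((*) u)"
    then obtain z where "y = u * z" by auto
    then have "w * y = (u * w * u) * z" using sc[of w] by (simp add: mult.assoc)
    then have "w * y = u * (w * u * z)" by (simp add: mult.assoc)
    then show "w * y \<in> range ((*) u)" by auto
  qed
qed

lemma comb: "\<exists>e. e \<in> S_l \<and> (\<forall>y. (\<exists>z. y = e * z) \<longleftrightarrow> (\<forall>i<N. \<forall>s. coeff (f::'a poly) i * s * y = 0))"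
proof (induct N)
  case 0
  have "(1::'a) \<in> S_l" by (simp add: S_l_iff)
  then show ?case by (intro exI[of _ 1]) auto
next
  case (Suc N)
  then obtain e where e: "e \<in> S_l" "\<forall>y. (\<exists>z. y = e * z) \<longleftrightarrow> (\<forall>i<N. \<forall>s. coeff f i * s * y = 0)"
    by blast
  obtain e' where e': "e' \<in> S_l" "\<forall>y. (\<exists>z. y = e' * z) \<longleftrightarrow> (\<forall>s. coeff f N * s * y = 0)"
    using pq_e by blast
  have ee: "e * e = e" "\<And>r. e * r * e = r * e" using e(1) by (auto simp: S_l_iff)
  have ee': "e' * e' = e'" "\<And>r. e' * r * e' = r * e'" using e'(1) by (auto simp: S_l_iff)
  have E1: "(e * e') * (e * e') = e * e'"
    by (metis ee(1) ee'(2) mult.assoc)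
  have E2: "(e * e') * r * (e * e') = r * (e * e')" for r
    by (metis ee(2) ee'(2) mult.assoc)
  have ch: "(\<exists>z. y = (e * e') * z) \<longleftrightarrow> (\<exists>z. y = e * z) \<and> (\<exists>z. y = e' * z)" for y
  proof
    assume "\<exists>z. y = (e * e') * z"
    then obtain z where z: "y = e * e' * z" by blast
    have "y = e * (e' * z)" using z by (simp add: mult.assoc)
    moreover have "y = e' * (e * e' * z)"
    proof -
      have "e' * (e * e' * z) = (e' * e * e') * z" by (simp add: mult.assoc)
      then show ?thesis using z ee'(2)[of e] by simp
    qed
    ultimately show "(\<exists>z. y = e * z) \<and> (\<exists>z. y = e' * z)" by blast
  next
    assume "(\<exists>z. y = e * z) \<and> (\<exists>z. y = e' * z)"
    then obtain z z' where z: "y = e * z" "y = e' * z'" by blast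
    have "e * y = y" using z(1) ee(1) by (metis mult.assoc)
    moreover have "e' * y = y" using z(2) ee'(1) by (metis mult.assoc)
    ultimately have "y = (e * e') * y" by (simp add: mult.assoc)
    then show "\<exists>z. y = (e * e') * z" by blast
  qed
  show ?case
    by (intro exI[of _ "e * e'"]) (auto simp: S_l_iff E1 E2 ch e(2) e'(2) less_Suc_eq)
qed

lemma claim: "\<forall>s. om (om f s) g = 0 \<Longrightarrow> coeff f i * r * coeff g j = 0"
proof (induction "degree f + degree g" arbitrary: f g i j r rule: less_induct)
  case less
  show ?case
  proof (cases "f = 0 \<or> g = 0")
    case True then show ?thesis by auto
  next
    case False
    define m where "m = degree f"
    define n where "n = degree g"
    define a where "a = coeff f m"
    have top: "a * r' * coeff g n = 0" for r'
    proof -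
      let ?p = "om f [:r':]"
      have "degree ?p \<le> m + 0 \<and> coeff ?p (m + 0) = coeff f m * (\<sigma>^^m) (coeff [:r':] 0)"
        by (rule om_top) (simp_all add: m_def)
      then have p: "degree ?p \<le> m" "coeff ?p m = a * (\<sigma>^^m) r'" by (simp_all add: a_def)
      have "degree (om ?p g) \<le> m + n \<and> coeff (om ?p g) (m + n) = coeff ?p m * (\<sigma>^^m) (coeff g n)"
        by (rule om_top) (simp_all add: p n_def)
      moreover have "om ?p g = 0" using less.prems by simp
      ultimately have "a * (\<sigma>^^m) (r' * coeff g n) = 0" by (simp add: p sp_mult mult.assoc)
      then show ?thesis using Cpow by (simp add: mult.assoc)
    qed
    obtain u where u: "u \<in> S_l" "\<forall>y. (\<exists>z. y = u * z) \<longleftrightarrow> (\<forall>s. a * s * y = 0)"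
      using pq_e by blast
    have uu: "u * u = u" using u(1) by (simp add: S_l_iff)
    have ub: "u * coeff g n = coeff g n"
    proof -
      obtain z where "coeff g n = u * z" using u(2) top by blast
      then show ?thesis using uu by (metis mult.assoc)
    qed
    have Uc: "u * y \<in> range ((*) u)" for y by auto
    define g1 where "g1 = lsm u g"
    define g2 where "g2 = lsm (1 - u) g"
    have gsplit: "coeff g j = coeff g1 j + coeff g2 j" for j
      by (simp add: g1_def g2_def algebra_simps)
    have H1: "\<forall>s. om (om f s) g1 = 0"
    proof
      fix s
      have "om (om f s) g1 = om (om f s) (om [:u:] g)" by (simp add: g1_def om_const_left)
      also have "\<dots> = om (om f (om s [:u:])) g" by (simp add: om_assoc)
      also have "\<dots> = 0" using less.prems by simp
      finally show "om (om f s) g1 = 0" .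
    qed
    have g21: "g2 = g - g1" by (simp add: poly_eq_iff g1_def g2_def algebra_simps)
    have H2: "\<forall>s. om (om f s) g2 = 0"
      using H1 less.prems by (simp add: g21 om_diff_right)
    have c2: "coeff f i * r * coeff g2 j = 0" for i r j
    proof (cases "n = 0")
      case True
      have "coeff g2 k = 0" for k
      proof (cases k)
        case 0 then show ?thesis using ub True by (simp add: g2_def algebra_simps)
      next
        case (Suc k') then show ?thesis using True by (simp add: g2_def coeff_eq_0 n_def)
      qed
      then show ?thesis by simp
    next
      case False
      have "degree g2 \<le> n - 1"
      proof (rule degree_le, intro allI impI)
        fix k assume "n - 1 < k"
        then have "k = n \<or> n < k" using False by auto
        then show "coeff g2 k = 0" using ub
          by (auto simp: g2_def algebra_simps coeff_eq_0 n_def)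
      qed
      then have "degree f + degree g2 < degree f + degree g" using False by (simp add: n_def)
      then show ?thesis using less.hyps H2 by blast
    qed
    define f' where "f' = f - monom a m"
    have H3: "\<forall>s. om (om f' s) g1 = 0"
    proof
      fix s
      have k: "om (om (monom a m) s) g1 = 0"
      proof (rule kill[of "range ((*) u)"])
        show "\<forall>i. \<forall>y\<in>range ((*) u). coeff (monom a m) i * y = 0"
          using u(2) by (auto simp: image_iff) (metis mult_1_right)
        show "\<forall>n. coeff g1 n \<in> range ((*) u)" by (simp add: g1_def)
      qed (use U_closed[OF u(1)] in auto)
      show "om (om f' s) g1 = 0" using k H1 by (simp add: f'_def om_diff_left)
    qed
    have c1: "coeff f i * r * coeff g1 j = 0" for i r j
    proof (cases "i = m")
      case True
      then show ?thesis using u(2) by (auto simp: g1_def a_def)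
    next
      case ne: False
      have fi: "coeff f i = coeff f' i" using ne by (simp add: f'_def)
      show ?thesis
      proof (cases "m = 0")
        case True
        then have "coeff f i = 0" using ne by (simp add: coeff_eq_0 m_def)
        then show ?thesis by simp
      next
        case False
        have "degree f' \<le> m - 1"
        proof (rule degree_le, intro allI impI)
          fix k assume "m - 1 < k"
          then have "k = m \<or> m < k" using False by auto
          then show "coeff f' k = 0" by (auto simp: f'_def a_def coeff_eq_0 m_def)
        qed
        moreover have "degree g1 \<le> degree g"
          by (rule degree_le) (simp add: g1_def coeff_eq_0)
        ultimately have "degree f' + degree g1 < degree f + degree g" using False by (simp add: m_def)
        then show ?thesis using less.hyps H3 fi by metis
      qed
    qed
    show ?thesis using c1 c2 gsplit by (simp add: distrib_left)
  qed
qed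

end
theorem proposition3p2:
  fixes \<sigma> \<delta> :: "'a::ring_1 \<Rightarrow> 'a"
  assumes "ring_endo \<sigma>"
    and "sigma_derivation \<sigma> \<delta>"
    and "\<forall>e\<in>S_l. sd_stable \<sigma> \<delta> (range (\<lambda>r. r * e))"
    and "cond_C_sigma \<sigma>"
    and "right_pq_Baer ((*) :: 'a \<Rightarrow> 'a \<Rightarrow> 'a) 0"
  shows "right_pq_Baer (ore_mult \<sigma> \<delta>) 0"
proof -
  interpret ore2 \<sigma> \<delta> using assms by (simp add: ore2_def ore_def ore2_axioms_def)
  show ?thesis unfolding right_pq_Baer_def
  proof
    fix f :: "'a poly"
    obtain e where e: "e \<in> S_l"
      "\<forall>y. (\<exists>z. y = e * z) \<longleftrightarrow> (\<forall>i<Suc (degree f). \<forall>s. coeff f i * s * y = 0)"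
      using comb by blast
    have ch: "(\<exists>z. y = e * z) \<longleftrightarrow> (\<forall>i s. coeff f i * s * y = 0)" for y
    proof -
      have "(\<forall>i<Suc (degree f). \<forall>s. coeff f i * s * y = 0) \<longleftrightarrow> (\<forall>i s. coeff f i * s * y = 0)"
        by (metis coeff_eq_0 mult_zero_left not_less_eq)
      then show ?thesis using e(2) by simp
    qed
    have ee: "e * e = e" using e(1) by (simp add: S_l_iff)
    have EE: "om [:e:] [:e:] = [:e:]"
      by (simp add: om_const_left poly_eq_iff coeff_pCons' ee)
    have "{t. \<forall>s. om (om f s) t = 0} = range (om [:e:])"
    proof (rule set_eqI, rule iffI)
      fix t assume "t \<in> {t. \<forall>s. om (om f s) t = 0}"
      then have H: "\<forall>s. om (om f s) t = 0" by simp
      have "e * coeff t j = coeff t j" for j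
      proof -
        have "\<forall>i s. coeff f i * s * coeff t j = 0" using claim[OF H] by blast
        then obtain z where "coeff t j = e * z" using ch by blast
        then show ?thesis using ee by (metis mult.assoc)
      qed
      then have "t = om [:e:] t" by (simp add: om_const_left poly_eq_iff)
      then show "t \<in> range (om [:e:])" by blast
    next
      fix t assume "t \<in> range (om [:e:])"
      then obtain h where h: "t = lsm e h" by (auto simp: om_const_left)
      have "om (om f s) t = 0" for s
      proof (rule kill[of "range ((*) e)"])
        show "\<forall>i. \<forall>y\<in>range ((*) e). coeff f i * y = 0"
          using ch by (auto simp: image_iff) (metis mult_1_right)
        show "\<forall>n. coeff t n \<in> range ((*) e)" by (simp add: h)
      qed (use U_closed[OF e(1)] in auto)
      then show "t \<in> {t. \<forall>s. om (om f s) t = 0}" by simp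
    qed
    then show "\<exists>E. om E E = E \<and> {t. \<forall>s. om (om f s) t = 0} = range (om E)"
      using EE by blast
  qed
qed

end
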